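(* Let $(\mathcal{V},g)$ be a real scalar product space of dimension $n>2m$, let $J_1,\dots,J_m$ be skew-adjoint endomorphisms of $\mathcal{V}$ with $J_iJ_j+J_jJ_i=2\delta_{ij}\,\mathrm{id}$ for $1\le i,j\le m$, and let $\mu_0\in\mathbb{R}$ and $\mu_1,\dots,\mu_m\in\mathbb{R}\setminus\{0\}$. Suppose there exist $\theta_0,\dots,\theta_m\in\mathbb{R}$, not all zero, and a nonzero $X\in\mathcal{V}$ such that $\theta_0X+\theta_1J_1X+\dots+\theta_mJ_mX=0$ and $$\theta_0^2=\sum_{i=1}^m\theta_i^2=-\mu_0\sum_{i=1}^m\frac{\theta_i^2}{3\mu_i}.$$ Then the (anti-Clifford) algebraic curvature tensor $R=\mu_0R^0+\sum_{i=1}^m\mu_iR^{J_i}$ is not totally Jacobi-dual.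
   Context: A scalar product space is a finite-dimensional real vector space with a nondegenerate symmetric bilinear form $g$; $\varepsilon_X=g(X,X)$. $R^0(X,Y,Z,W)=g(Y,Z)g(X,W)-g(X,Z)g(Y,W)$; for skew-adjoint $J$, $R^J(X,Y,Z,W)=g(JX,Z)g(JY,W)-g(JY,Z)g(JX,W)+2g(JX,Y)g(JZ,W)$. The Jacobi operator is $\mathcal{J}_X(Y)=\sum_{i}\varepsilon_{E_i}R(Y,X,X,E_i)E_i$ for an orthonormal basis $(E_i)$. An eigenvector of $\mathcal{J}_X$ is a nonzero $Y$ with $\mathcal{J}_X(Y)=\lambda Y$, $\lambda\in\mathbb{R}$. $R$ is totally Jacobi-dual if for all $X,Y\in\mathcal{V}$ with $X\neq0$: whenever $Y$ is an eigenvector of $\mathcal{J}_X$, then $X$ is an eigenvector of $\mathcal{J}_Y$. *)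

theory Defs
  imports "HOL-Analysis.Analysis"
begin

text \<open>Scalar product space: a finite-dimensional real vector space (type class
  euclidean_space, used only as a carrier of a finite-dimensional real vector space;
  its built-in inner product is NOT used) with a nondegenerate symmetric bilinear form g.\<close>

definition scalar_product :: "('v::euclidean_space \<Rightarrow> 'v \<Rightarrow> real) \<Rightarrow> bool" where
  "scalar_product g \<longleftrightarrow> bilinear g \<and> (\<forall>x y. g x y = g y x) \<and>
     (\<forall>x. (\<forall>y. g x y = 0) \<longrightarrow> x = 0)"

definition skew_adjoint :: "('v::euclidean_space \<Rightarrow> 'v \<Rightarrow> real) \<Rightarrow> ('v \<Rightarrow> 'v) \<Rightarrow> bool" where
  "skew_adjoint g J \<longleftrightarrow> linear J \<and> (\<forall>x y. g (J x) y = - g x (J y))"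

definition R0 :: "('v \<Rightarrow> 'v \<Rightarrow> real) \<Rightarrow> 'v \<Rightarrow> 'v \<Rightarrow> 'v \<Rightarrow> 'v \<Rightarrow> real" where
  "R0 g X Y Z W = g Y Z * g X W - g X Z * g Y W"

definition RJ :: "('v \<Rightarrow> 'v \<Rightarrow> real) \<Rightarrow> ('v \<Rightarrow> 'v) \<Rightarrow> 'v \<Rightarrow> 'v \<Rightarrow> 'v \<Rightarrow> 'v \<Rightarrow> real" where
  "RJ g J X Y Z W = g (J X) Z * g (J Y) W - g (J Y) Z * g (J X) W + 2 * g (J X) Y * g (J Z) W"

definition g_orthonormal_basis :: "('v::euclidean_space \<Rightarrow> 'v \<Rightarrow> real) \<Rightarrow> 'v set \<Rightarrow> bool" where
  "g_orthonormal_basis g B \<longleftrightarrow> finite B \<and> independent B \<and> span B = UNIV \<and>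
     (\<forall>e\<in>B. g e e = 1 \<or> g e e = -1) \<and> (\<forall>e\<in>B. \<forall>f\<in>B. e \<noteq> f \<longrightarrow> g e f = 0)"

definition jacobi_op :: "('v::euclidean_space \<Rightarrow> 'v \<Rightarrow> real) \<Rightarrow> ('v \<Rightarrow> 'v \<Rightarrow> 'v \<Rightarrow> 'v \<Rightarrow> real)
    \<Rightarrow> 'v \<Rightarrow> 'v \<Rightarrow> 'v" where
  "jacobi_op g R X Y = (let B = (SOME B. g_orthonormal_basis g B) in
     (\<Sum>E\<in>B. (g E E * R Y X X E) *\<^sub>R E))"

definition is_eigenvector :: "('v::real_vector \<Rightarrow> 'v) \<Rightarrow> 'v \<Rightarrow> bool" where
  "is_eigenvector f Y \<longleftrightarrow> Y \<noteq> 0 \<and> (\<exists>c::real. f Y = c *\<^sub>R Y)"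

definition totally_jacobi_dual :: "('v::euclidean_space \<Rightarrow> 'v \<Rightarrow> real) \<Rightarrow> ('v \<Rightarrow> 'v \<Rightarrow> 'v \<Rightarrow> 'v \<Rightarrow> real) \<Rightarrow> bool" where
  "totally_jacobi_dual g R \<longleftrightarrow> (\<forall>X Y. X \<noteq> 0 \<longrightarrow> is_eigenvector (jacobi_op g R X) Y
       \<longrightarrow> is_eigenvector (jacobi_op g R Y) X)"

end

theory Submission
  imports Defs
begin


context
  fixes g :: "'v::euclidean_space \<Rightarrow> 'v \<Rightarrow> real"
  assumes sp: "scalar_product g"
begin

lemma bil: "bilinear g" using sp unfolding scalar_product_def by auto
lemma gsym: "g x y = g y x" using sp unfolding scalar_product_def by auto
lemma gnd: "(\<And>y. g x y = 0) \<Longrightarrow> x = 0" using sp unfolding scalar_product_def by auto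

lemma gl_add[simp]: "g (x + y) z = g x z + g y z" by (rule bilinear_ladd[OF bil])
lemma gr_add[simp]: "g z (x + y) = g z x + g z y" by (rule bilinear_radd[OF bil])
lemma gl_scale[simp]: "g (c *\<^sub>R x) y = c * g x y" using bilinear_lmul[OF bil] by simp
lemma gr_scale[simp]: "g x (c *\<^sub>R y) = c * g x y" using bilinear_rmul[OF bil] by simp
lemma gl_sub[simp]: "g (x - y) z = g x z - g y z" by (rule bilinear_lsub[OF bil])
lemma gr_sub[simp]: "g z (x - y) = g z x - g z y" by (rule bilinear_rsub[OF bil])
lemma gl_neg[simp]: "g (- x) z = - g x z" by (rule bilinear_lneg[OF bil])
lemma gr_neg[simp]: "g z (- x) = - g z x" by (rule bilinear_rneg[OF bil])
lemma gl_zero[simp]: "g 0 z = 0" by (rule bilinear_lzero[OF bil])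
lemma gr_zero[simp]: "g z 0 = 0" by (rule bilinear_rzero[OF bil])
lemma gl_sum[simp]: "g (sum f S) z = (\<Sum>i\<in>S. g (f i) z)"
  by (induction S rule: infinite_finite_induct) auto
lemma gr_sum[simp]: "g z (sum f S) = (\<Sum>i\<in>S. g z (f i))"
  by (induction S rule: infinite_finite_induct) auto

lemma onb_exists_sub:
  "\<forall>S. dim S = n \<longrightarrow> subspace S \<longrightarrow> (\<forall>x\<in>S. (\<forall>y\<in>S. g x y = 0) \<longrightarrow> x = 0) \<longrightarrow>
    (\<exists>B. finite B \<and> B \<subseteq> S \<and> independent B \<and> span B = S \<and>
       (\<forall>e\<in>B. g e e = 1 \<or> g e e = -1) \<and> (\<forall>e\<in>B. \<forall>f\<in>B. e \<noteq> f \<longrightarrow> g e f = 0))"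
proof (induction n rule: less_induct)
  case (less n)
  show ?case
  proof (intro allI impI)
    fix S :: "'v set"
    assume dS: "dim S = n" and sS: "subspace S" and nd: "\<forall>x\<in>S. (\<forall>y\<in>S. g x y = 0) \<longrightarrow> x = 0"
    show "\<exists>B. finite B \<and> B \<subseteq> S \<and> independent B \<and> span B = S \<and>
       (\<forall>e\<in>B. g e e = 1 \<or> g e e = -1) \<and> (\<forall>e\<in>B. \<forall>f\<in>B. e \<noteq> f \<longrightarrow> g e f = 0)"
    proof (cases "S = {0}")
      case True
      then show ?thesis by (intro exI[of _ "{}"]) (auto simp: independent_empty)
    next
      case False
      then obtain x where xS: "x \<in> S" and x0: "x \<noteq> 0" using sS subspace_0 by blast
      then obtain y where yS: "y \<in> S" and xy: "g x y \<noteq> 0" using nd by blast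
      obtain v where vS: "v \<in> S" and vv: "g v v \<noteq> 0"
      proof -
        consider "g x x \<noteq> 0" | "g y y \<noteq> 0" | "g x x = 0" "g y y = 0" by blast
        then show ?thesis
        proof cases
          case 1 then show ?thesis using that xS by blast
        next
          case 2 then show ?thesis using that yS by blast
        next
          case 3
          have "g (x + y) (x + y) = 2 * g x y" using 3 gsym[of x y] by simp
          then show ?thesis using that[of "x + y"] xy sS xS yS subspace_add by fastforce
        qed
      qed
      define e where "e = (1 / sqrt \<bar>g v v\<bar>) *\<^sub>R v"
      have ee: "g e e = sgn (g v v)"
        unfolding e_def using vv
        by (simp add: sgn_if)
      have ee0: "g e e \<noteq> 0" using ee vv by (simp add: sgn_if)
      have eS: "e \<in> S" unfolding e_def using vS sS subspace_scale by blast
      define S' where "S' = {z\<in>S. g e z = 0}"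
      have sS': "subspace S'" unfolding S'_def subspace_def using sS subspace_0 subspace_add subspace_scale
        by auto
      have dec: "z - (g e z / g e e) *\<^sub>R e \<in> S'" if "z \<in> S" for z
        unfolding S'_def using that eS ee0 by (auto intro!: subspace_diff[OF sS] subspace_scale[OF sS])
      have nd': "\<forall>x\<in>S'. (\<forall>y\<in>S'. g x y = 0) \<longrightarrow> x = 0"
      proof (intro ballI impI)
        fix x assume xS': "x \<in> S'" and h: "\<forall>y\<in>S'. g x y = 0"
        have "\<forall>z\<in>S. g x z = 0"
        proof
          fix z assume "z \<in> S"
          then have "g x (z - (g e z / g e e) *\<^sub>R e) = 0" using h dec by blast
          moreover have "g x e = 0" using xS' gsym[of x e] unfolding S'_def by auto
          ultimately show "g x z = 0" by simp
        qed
        then show "x = 0" using nd xS' unfolding S'_def by auto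
      qed
      have sub: "S' \<subset> S" using eS ee0 unfolding S'_def by auto
      have "dim S' < dim S"
      proof (rule dim_psubset)
        have e1: "span S' = S'" and e2: "span S = S" using sS sS' by (metis span_eq_iff)+
        show "span S' \<subset> span S" unfolding e1 e2 by (rule sub)
      qed
      then obtain B' where B': "finite B'" "B' \<subseteq> S'" "independent B'" "span B' = S'"
         "\<forall>e\<in>B'. g e e = 1 \<or> g e e = -1" "\<forall>e\<in>B'. \<forall>f\<in>B'. e \<noteq> f \<longrightarrow> g e f = 0"
        using less.IH[of "dim S'"] dS sS' nd' by blast
      have eB': "e \<notin> span B'" using B'(4) ee0 unfolding S'_def by auto
      have spanB: "span (insert e B') = S"
      proof
        show "span (insert e B') \<subseteq> S" using B'(2) eS sS sub
          by (metis insert_subset order.strict_implies_order span_minimal subset_trans)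
        show "S \<subseteq> span (insert e B')"
        proof
          fix z assume zS: "z \<in> S"
          have "z = (z - (g e z / g e e) *\<^sub>R e) + (g e z / g e e) *\<^sub>R e" by simp
          moreover have "z - (g e z / g e e) *\<^sub>R e \<in> span (insert e B')"
            using dec[OF zS] B'(4) span_mono[of B' "insert e B'"] by auto
          moreover have "(g e z / g e e) *\<^sub>R e \<in> span (insert e B')"
            by (simp add: span_base span_scale)
          ultimately show "z \<in> span (insert e B')" by (metis span_add)
        qed
      qed
      show ?thesis
      proof (intro exI[of _ "insert e B'"] conjI)
        show "finite (insert e B')" using B' by simp
        show "insert e B' \<subseteq> S" using B'(2) eS sub by auto
        show "independent (insert e B')" using B'(3) eB' independent_insertI by blast
        show "span (insert e B') = S" by (rule spanB)
        show "\<forall>e\<in>insert e B'. g e e = 1 \<or> g e e = - 1" using B'(5) ee vv by (auto simp: sgn_if)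
        show "\<forall>ea\<in>insert e B'. \<forall>f\<in>insert e B'. ea \<noteq> f \<longrightarrow> g ea f = 0"
          using B'(2,6) unfolding S'_def by (auto simp: gsym)
      qed
    qed
  qed
qed

lemma onb_exists: "\<exists>B. g_orthonormal_basis g B"
proof -
  have nd: "\<forall>x\<in>(UNIV::'v set). (\<forall>y\<in>UNIV. g x y = 0) \<longrightarrow> x = 0" using gnd by blast
  have "\<exists>B. finite B \<and> B \<subseteq> UNIV \<and> independent B \<and> span B = UNIV \<and>
       (\<forall>e\<in>B. g e e = 1 \<or> g e e = -1) \<and> (\<forall>e\<in>B. \<forall>f\<in>B. e \<noteq> f \<longrightarrow> g e f = 0)"
    by (rule onb_exists_sub[rule_format, OF refl subspace_UNIV]) (use gnd in blast)
  then show ?thesis unfolding g_orthonormal_basis_def by simp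
qed

lemma onb_expand:
  assumes B: "g_orthonormal_basis g B"
  shows "v = (\<Sum>E\<in>B. (g E E * g v E) *\<^sub>R E)"
proof -
  define w where "w = v - (\<Sum>E\<in>B. (g E E * g v E) *\<^sub>R E)"
  have fin: "finite B" using B unfolding g_orthonormal_basis_def by auto
  have wB: "g w F = 0" if F: "F \<in> B" for F
  proof -
    have "(\<Sum>E\<in>B. g E E * g v E * g E F) = (\<Sum>E\<in>{F}. g E E * g v E * g E F)"
      by (rule sum.mono_neutral_right) (use fin F B in \<open>auto simp: g_orthonormal_basis_def\<close>)
    also have "\<dots> = g v F"
      using B F unfolding g_orthonormal_basis_def by auto
    finally show ?thesis unfolding w_def by simp
  qed
  have "span B \<subseteq> {y. g w y = 0}"
    by (rule span_minimal) (auto simp: subspace_def intro: wB)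
  moreover have "span B = UNIV" using B unfolding g_orthonormal_basis_def by simp
  ultimately have "g w y = 0" for y by auto
  then have "w = 0" using gnd by blast
  then show ?thesis unfolding w_def by simp
qed

lemma jacobi_op_eq:
  assumes "\<And>E. R Y X X E = g V E"
  shows "jacobi_op g R X Y = V"
proof -
  have B: "g_orthonormal_basis g (SOME B. g_orthonormal_basis g B)"
    using onb_exists by (rule someI_ex)
  show ?thesis unfolding jacobi_op_def Let_def assms
    by (rule onb_expand[OF B, symmetric])
qed

end


context
  fixes g :: "'v::euclidean_space \<Rightarrow> 'v \<Rightarrow> real"
  assumes sp: "scalar_product g"
begin

definition Gm :: "'v \<Rightarrow> 'v" where "Gm y = (\<Sum>b\<in>Basis. g b y *\<^sub>R b)"

lemma Gm_inner: "x \<bullet> Gm y = g x y"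
proof -
  have "x \<bullet> Gm y = (\<Sum>b\<in>Basis. (x \<bullet> b) * g b y)"
    unfolding Gm_def by (simp add: inner_sum_right mult.commute)
  also have "\<dots> = g (\<Sum>b\<in>Basis. (x \<bullet> b) *\<^sub>R b) y"
    by (simp add: gl_sum[OF sp] gl_scale[OF sp])
  also have "\<dots> = g x y" by (simp add: euclidean_representation)
  finally show ?thesis .
qed

lemma Gm_linear: "linear Gm"
  unfolding Gm_def
  by (rule linearI) (simp_all add: gr_add[OF sp] gr_scale[OF sp] scaleR_add_left sum.distrib scaleR_sum_right)

lemma Gm_inj: "inj Gm"
proof (rule injI)
  fix x y assume "Gm x = Gm y"
  then have "g z (x - y) = 0" for z using Gm_inner[of z x] Gm_inner[of z y] gr_sub[OF sp] by simp
  then have "x - y = 0" using gnd[OF sp] gsym[OF sp] by metis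
  then show "x = y" by simp
qed

lemma dim_orth1:
  assumes "X \<noteq> 0"
  shows "dim {z. g X z = 0} + 1 = DIM('v)"
proof -
  have GX: "Gm X \<noteq> 0" using Gm_inj assms linear_0[OF Gm_linear] by (metis injD)
  have eq: "{z. g X z = 0} = {y \<in> UNIV. \<forall>x \<in> span {Gm X}. orthogonal x y}"
  proof (intro set_eqI iffI)
    fix y assume "y \<in> {z. g X z = 0}"
    then have "Gm X \<bullet> y = 0" using Gm_inner[of y X] gsym[OF sp, of X y] by (simp add: inner_commute)
    then show "y \<in> {y \<in> UNIV. \<forall>x \<in> span {Gm X}. orthogonal x y}"
      by (auto simp: span_singleton orthogonal_def)
  next
    fix y assume "y \<in> {y \<in> UNIV. \<forall>x \<in> span {Gm X}. orthogonal x y}"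
    then have "Gm X \<bullet> y = 0" by (auto simp: orthogonal_def span_base)
    then show "y \<in> {z. g X z = 0}" using Gm_inner[of y X] gsym[OF sp, of X y] by (simp add: inner_commute)
  qed
  have "dim {y \<in> UNIV. \<forall>x \<in> span {Gm X}. orthogonal x y} + dim (span {Gm X}) = dim (UNIV::'v set)"
    by (rule dim_subspace_orthogonal_to_vectors) auto
  then show ?thesis using GX by (simp add: eq dim_span dim_singleton dim_UNIV)
qed

lemma dim_iso:
  assumes sI: "subspace I" and iso: "\<forall>x\<in>I. \<forall>y\<in>I. g x y = 0"
  shows "2 * dim I \<le> DIM('v)"
proof -
  have s2: "subspace (Gm ` I)" using linear_subspace_image[OF Gm_linear sI] .
  have d: "dim {y \<in> UNIV. \<forall>x \<in> Gm ` I. orthogonal x y} + dim (Gm ` I) = dim (UNIV::'v set)"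
    by (rule dim_subspace_orthogonal_to_vectors) (use s2 in auto)
  have "dim (Gm ` I) = dim I"
    by (rule dim_image_eq[OF Gm_linear]) (use Gm_inj in \<open>auto simp: inj_on_def inj_def\<close>)
  moreover have "dim I \<le> dim {y \<in> UNIV. \<forall>x \<in> Gm ` I. orthogonal x y}"
  proof (rule dim_subset)
    have "Gm x \<bullet> y = g y x" for x y by (metis Gm_inner inner_commute)
    then show "I \<subseteq> {y \<in> UNIV. \<forall>x \<in> Gm ` I. orthogonal x y}"
      using iso by (auto simp: orthogonal_def)
  qed
  ultimately show ?thesis using d by (simp add: dim_UNIV)
qed

end


context
  fixes g :: "'v::euclidean_space \<Rightarrow> 'v \<Rightarrow> real"
    and m :: nat
    and J :: "nat \<Rightarrow> 'v \<Rightarrow> 'v"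
  assumes sp: "scalar_product g"
    and sk: "\<forall>i\<in>{1..m}. skew_adjoint g (J i)"
    and cl: "\<forall>i\<in>{1..m}. \<forall>j\<in>{1..m}. \<forall>x. J i (J j x) + J j (J i x) = (if i = j then 2 else 0) *\<^sub>R x"
begin

lemma Jlin: "i \<in> {1..m} \<Longrightarrow> linear (J i)"
  using sk unfolding skew_adjoint_def by auto

lemma Jsk: "i \<in> {1..m} \<Longrightarrow> g (J i x) y = - g x (J i y)"
  using sk unfolding skew_adjoint_def by auto

lemma Jxx: "i \<in> {1..m} \<Longrightarrow> g (J i x) x = 0"
  using Jsk[of i x x] gsym[OF sp, of x "J i x"] by simp

lemma Jsum: "i \<in> {1..m} \<Longrightarrow> J i (\<Sum>j\<in>S. c j *\<^sub>R v j) = (\<Sum>j\<in>S. c j *\<^sub>R J i (v j))"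
  using Jlin[of i] by (simp add: linear_sum linear_scale)

lemma Aop_sq:
  "(\<Sum>i=1..m. a i *\<^sub>R J i (\<Sum>j=1..m. a j *\<^sub>R J j x)) = (\<Sum>i=1..m. (a i)\<^sup>2) *\<^sub>R x"
proof -
  define T where "T = (\<Sum>i=1..m. \<Sum>j=1..m. (a i * a j) *\<^sub>R J i (J j x))"
  have L: "(\<Sum>i=1..m. a i *\<^sub>R J i (\<Sum>j=1..m. a j *\<^sub>R J j x)) = T"
    unfolding T_def by (intro sum.cong refl) (simp add: Jsum scaleR_sum_right)
  have T2: "T = (\<Sum>i=1..m. \<Sum>j=1..m. (a i * a j) *\<^sub>R J j (J i x))"
    unfolding T_def by (subst sum.swap) (simp add: mult.commute)
  have "T + T = (\<Sum>i=1..m. \<Sum>j=1..m. (a i * a j) *\<^sub>R (J i (J j x) + J j (J i x)))"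
    by (subst (2) T2) (simp add: T_def scaleR_add_right sum.distrib)
  also have "\<dots> = (\<Sum>i=1..m. \<Sum>j=1..m. (a i * a j) *\<^sub>R ((if i = j then 2 else 0) *\<^sub>R x))"
    using cl by (intro sum.cong refl) simp
  also have "\<dots> = (\<Sum>i=1..m. \<Sum>j=1..m. if j = i then (2 * (a i)\<^sup>2) *\<^sub>R x else 0)"
    by (intro sum.cong refl) (auto simp: power2_eq_square)
  also have "\<dots> = (\<Sum>i=1..m. (2 * (a i)\<^sup>2) *\<^sub>R x)"
    by (intro sum.cong refl) (simp add: sum.delta)
  finally have "T + T = (\<Sum>i=1..m. (2 * (a i)\<^sup>2) *\<^sub>R x)" .
  also have "\<dots> = 2 *\<^sub>R ((\<Sum>i=1..m. (a i)\<^sup>2) *\<^sub>R x)"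
    by (simp add: scaleR_sum_left scaleR_sum_right)
  finally have "2 *\<^sub>R T = 2 *\<^sub>R ((\<Sum>i=1..m. (a i)\<^sup>2) *\<^sub>R x)" by (simp add: scaleR_2)
  then have "T = (\<Sum>i=1..m. (a i)\<^sup>2) *\<^sub>R x" by (metis scaleR_cancel_left zero_neq_numeral)
  then show ?thesis using L by simp
qed

lemma Aop_skew:
  "g (\<Sum>i=1..m. a i *\<^sub>R J i x) y = - g x (\<Sum>i=1..m. a i *\<^sub>R J i y)"
  by (simp add: gl_sum[OF sp] gr_sum[OF sp] gl_scale[OF sp] gr_scale[OF sp] Jsk sum_negf[symmetric])

lemma Aop_lin: "linear (\<lambda>x. \<Sum>i=1..m. a i *\<^sub>R J i x)"
proof (rule linearI)
  fix x y show "(\<Sum>i=1..m. a i *\<^sub>R J i (x + y)) = (\<Sum>i=1..m. a i *\<^sub>R J i x) + (\<Sum>i=1..m. a i *\<^sub>R J i y)"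
    using Jlin by (simp add: linear_add scaleR_add_right sum.distrib)
next
  fix c x show "(\<Sum>i=1..m. a i *\<^sub>R J i (c *\<^sub>R x)) = c *\<^sub>R (\<Sum>i=1..m. a i *\<^sub>R J i x)"
    unfolding scaleR_sum_right by (rule sum.cong) (auto simp: Jlin linear_scale)
qed

lemma Jinj:
  assumes "X \<noteq> 0" "i \<in> {1..m}" "j \<in> {1..m}" "J i X = J j X"
  shows "i = j"
proof (rule ccontr)
  assume ij: "i \<noteq> j"
  have "J i (J i X) + J i (J i X) = 2 *\<^sub>R X" using cl assms(2) by auto
  then have a: "J i (J i X) = X" by (simp add: scaleR_2[symmetric])
  have "J j (J j X) + J j (J j X) = 2 *\<^sub>R X" using cl assms(3) by auto
  then have b: "J j (J j X) = X" by (simp add: scaleR_2[symmetric])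
  have "J i (J j X) + J j (J i X) = 0" using cl assms(2,3) ij by auto
  then have "X + X = 0" using a b assms(4) by simp
  then show False using assms(1) by (simp add: scaleR_2[symmetric])
qed

lemma Jindep:
  assumes X0: "X \<noteq> 0"
  shows "independent ((\<lambda>i. J i X) ` {1..m})"
proof (rule independent_if_scalars_zero)
  show "finite ((\<lambda>i. J i X) ` {1..m})" by simp
next
  fix f :: "'v \<Rightarrow> real" and v
  assume s: "(\<Sum>x\<in>(\<lambda>i. J i X) ` {1..m}. f x *\<^sub>R x) = 0" and v: "v \<in> (\<lambda>i. J i X) ` {1..m}"
  have inj: "inj_on (\<lambda>i. J i X) {1..m}" using Jinj[OF X0] by (auto simp: inj_on_def)
  define a where "a i = f (J i X)" for i
  have s2: "(\<Sum>i=1..m. a i *\<^sub>R J i X) = 0"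
    using s sum.reindex[OF inj, of "\<lambda>x. f x *\<^sub>R x"] unfolding a_def by (simp add: o_def)
  have "(\<Sum>i=1..m. (a i)\<^sup>2) *\<^sub>R X = 0"
    using Aop_sq[of a X] s2 Jlin by (simp add: linear_0)
  then have "(\<Sum>i=1..m. (a i)\<^sup>2) = 0" using X0 by simp
  then have "\<forall>i\<in>{1..m}. (a i)\<^sup>2 = 0" by (subst (asm) sum_nonneg_eq_0_iff) auto
  then show "f v = 0" using v unfolding a_def by auto
qed

end


context
  fixes g :: "'v::euclidean_space \<Rightarrow> 'v \<Rightarrow> real"
    and m :: nat
    and J :: "nat \<Rightarrow> 'v \<Rightarrow> 'v"
    and \<mu> :: "nat \<Rightarrow> real"
    and \<theta> :: "nat \<Rightarrow> real"
    and X :: 'v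
  assumes sp: "scalar_product g"
    and dimv: "DIM('v) > 2 * m"
    and sk: "\<forall>i\<in>{1..m}. skew_adjoint g (J i)"
    and cl: "\<forall>i\<in>{1..m}. \<forall>j\<in>{1..m}. \<forall>x. J i (J j x) + J j (J i x) = (if i = j then 2 else 0) *\<^sub>R x"
    and mu: "\<forall>i\<in>{1..m}. \<mu> i \<noteq> 0"
    and th: "\<exists>i\<in>{0..m}. \<theta> i \<noteq> 0"
    and X0: "X \<noteq> 0"
    and hX: "\<theta> 0 *\<^sub>R X + (\<Sum>i=1..m. \<theta> i *\<^sub>R J i X) = 0"
    and h1: "\<theta> 0 ^ 2 = (\<Sum>i=1..m. \<theta> i ^ 2)"
    and h2: "(\<Sum>i=1..m. \<theta> i ^ 2) = - \<mu> 0 * (\<Sum>i=1..m. \<theta> i ^ 2 / (3 * \<mu> i))"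
begin

lemmas gs[simp] = gl_add[OF sp] gr_add[OF sp] gl_scale[OF sp] gr_scale[OF sp] gl_sub[OF sp] gr_sub[OF sp]
  gl_neg[OF sp] gr_neg[OF sp] gl_zero[OF sp] gr_zero[OF sp] gl_sum[OF sp] gr_sum[OF sp]

abbreviation "Aop z \<equiv> (\<Sum>i=1..m. \<theta> i *\<^sub>R J i z)"

lemma t0: "\<theta> 0 \<noteq> 0"
proof
  assume "\<theta> 0 = 0"
  then have "(\<Sum>i=1..m. \<theta> i ^ 2) = 0" using h1 by simp
  then have "\<forall>i\<in>{1..m}. \<theta> i ^ 2 = 0" by (subst (asm) sum_nonneg_eq_0_iff) auto
  obtain i where i: "i \<in> {0..m}" "\<theta> i \<noteq> 0" using th by blast
  have "i \<noteq> 0"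
  proof
    assume "i = 0" then show False using i(2) \<open>\<theta> 0 = 0\<close> by simp
  qed
  then have "i \<in> {1..m}" using i by auto
  then show False using \<open>\<forall>i\<in>{1..m}. \<theta> i ^ 2 = 0\<close> i by auto
qed

lemma AX: "Aop X = - \<theta> 0 *\<^sub>R X"
proof -
  have "Aop X = - (\<theta> 0 *\<^sub>R X)" using hX add_eq_0_iff[of "\<theta> 0 *\<^sub>R X" "Aop X"] by blast
  then show ?thesis by simp
qed

lemma ex_k: "\<exists>k\<in>{1..m}. \<theta> k \<noteq> 0"
proof (rule ccontr)
  assume "\<not> ?thesis"
  then have "(\<Sum>i=1..m. \<theta> i ^ 2) = 0" by simp
  then show False using h1 t0 by simp
qed

lemma mu0: "\<mu> 0 \<noteq> 0"
proof
  assume "\<mu> 0 = 0"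
  then have "(\<Sum>i=1..m. \<theta> i ^ 2) = 0" using h2 by simp
  then show False using h1 t0 by simp
qed

lemma gXX: "g X X = 0"
proof -
  have "g X (Aop X) = (\<Sum>i=1..m. \<theta> i * g X (J i X))" by simp
  also have "\<dots> = 0"
  proof (rule sum.neutral, rule ballI)
    fix i assume "i \<in> {1..m}"
    then have "g (J i X) X = 0" by (rule Jxx[OF sp sk cl])
    then show "\<theta> i * g X (J i X) = 0" using gsym[OF sp, of X "J i X"] by simp
  qed
  finally have gA: "g X (Aop X) = 0" .
  have "g X (- \<theta> 0 *\<^sub>R X) = 0" unfolding AX[symmetric] by (rule gA)
  then show ?thesis using t0 by simp
qed

lemma A_sq: "Aop (Aop z) = (\<theta> 0)\<^sup>2 *\<^sub>R z"
  using Aop_sq[OF sp sk cl, of \<theta> z] h1 by simp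

lemma A_add: "Aop (x + y) = Aop x + Aop y"
  using linear_add[OF Aop_lin[OF sp sk cl]] by blast
lemma A_scale: "Aop (c *\<^sub>R x) = c *\<^sub>R Aop x"
  using linear_scale[OF Aop_lin[OF sp sk cl]] by blast
lemma A_diff: "Aop (x - y) = Aop x - Aop y"
  using linear_diff[OF Aop_lin[OF sp sk cl]] by blast
lemma A_0: "Aop 0 = 0"
  using linear_0[OF Aop_lin[OF sp sk cl]] by blast

lemma AJ: assumes i: "i \<in> {1..m}" shows "Aop (J i X) = \<theta> 0 *\<^sub>R J i X + (2 * \<theta> i) *\<^sub>R X"
proof -
  have "Aop (J i X) = (\<Sum>l=1..m. \<theta> l *\<^sub>R ((if l = i then 2 else 0) *\<^sub>R X - J i (J l X)))"
  proof (rule sum.cong[OF refl])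
    fix l assume l: "l \<in> {1..m}"
    have "J l (J i X) + J i (J l X) = (if l = i then 2 else 0) *\<^sub>R X" using cl l i by blast
    then show "\<theta> l *\<^sub>R J l (J i X) = \<theta> l *\<^sub>R ((if l = i then 2 else 0) *\<^sub>R X - J i (J l X))"
      by (metis add_diff_cancel_right')
  qed
  also have "\<dots> = (\<Sum>l=1..m. \<theta> l *\<^sub>R ((if l = i then 2 else 0) *\<^sub>R X)) - (\<Sum>l=1..m. \<theta> l *\<^sub>R J i (J l X))"
    by (simp only: scaleR_diff_right sum_subtractf)
  also have "\<dots> = (2 * \<theta> i) *\<^sub>R X - J i (Aop X)"
  proof -
    have "(\<Sum>l=1..m. \<theta> l *\<^sub>R ((if l = i then 2 else 0) *\<^sub>R X)) = (\<Sum>l=1..m. if l = i then (2 * \<theta> l) *\<^sub>R X else 0)"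
      by (rule sum.cong) auto
    also have "\<dots> = (2 * \<theta> i) *\<^sub>R X" using i by (simp add: sum.delta')
    finally show ?thesis by (simp only: Jsum[OF sp sk cl i])
  qed
  also have "\<dots> = (2 * \<theta> i) *\<^sub>R X + \<theta> 0 *\<^sub>R J i X"
  proof -
    have "J i (Aop X) = - \<theta> 0 *\<^sub>R J i X" by (simp only: AX linear_scale[OF Jlin[OF sp sk cl i]])
    then show ?thesis by simp
  qed
  finally show ?thesis by simp
qed


lemma ex_z: "\<exists>z. g X z = 0 \<and> \<theta> 0 *\<^sub>R z + Aop z \<notin> span ((\<lambda>i. J i X) ` {1..m})"
proof (rule ccontr)
  assume nt: "\<not> ?thesis"
  define U where "U = span ((\<lambda>i. J i X) ` {1..m})"
  have H: "\<theta> 0 *\<^sub>R z + Aop z \<in> U" if "g X z = 0" for z using nt that unfolding U_def by blast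
  define Ep where "Ep = {z. Aop z = \<theta> 0 *\<^sub>R z}"
  define Em where "Em = {z. Aop z = - \<theta> 0 *\<^sub>R z}"
  define K where "K = {z. g X z = 0}"
  define U' where "U' = U \<inter> Ep"
  have sU: "subspace U" unfolding U_def by (rule subspace_span)
  have sEp: "subspace Ep" unfolding Ep_def subspace_def by (auto simp: A_add[simplified] A_scale[simplified] A_0[simplified] algebra_simps)
  have sEm: "subspace Em" unfolding Em_def subspace_def by (auto simp: A_add[simplified] A_scale[simplified] A_0[simplified] algebra_simps)
  have sU': "subspace U'" unfolding U'_def using sU sEp by (rule subspace_inter)
  have t0: "\<theta> 0 \<noteq> 0" by (rule t0)
  have P1: "\<theta> 0 *\<^sub>R z + Aop z \<in> Ep" for z
    unfolding Ep_def by (simp add: A_add[simplified] A_scale[simplified] A_sq[simplified] power2_eq_square scaleR_add_right add.commute)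
  have P2: "\<theta> 0 *\<^sub>R z - Aop z \<in> Em" for z
    unfolding Em_def by (simp add: A_diff[simplified] A_scale[simplified] A_sq[simplified] power2_eq_square scaleR_diff_right algebra_simps)
  have dec: "K \<subseteq> {x + y |x y. x \<in> U' \<and> y \<in> Em}"
  proof
    fix z assume "z \<in> K"
    then have hz: "\<theta> 0 *\<^sub>R z + Aop z \<in> U" using H unfolding K_def by blast
    define x where "x = (1 / (2 * \<theta> 0)) *\<^sub>R (\<theta> 0 *\<^sub>R z + Aop z)"
    define y where "y = (1 / (2 * \<theta> 0)) *\<^sub>R (\<theta> 0 *\<^sub>R z - Aop z)"
    have "x \<in> U'" unfolding x_def U'_def using subspace_scale[OF sU hz] subspace_scale[OF sEp P1] by blast
    moreover have "y \<in> Em" unfolding y_def using subspace_scale[OF sEm P2] by blast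
    moreover have "z = x + y"
    proof -
      have "x + y = (1 / (2 * \<theta> 0)) *\<^sub>R ((\<theta> 0 *\<^sub>R z + Aop z) + (\<theta> 0 *\<^sub>R z - Aop z))"
        unfolding x_def y_def by (simp only: scaleR_add_right)
      also have "(\<theta> 0 *\<^sub>R z + Aop z) + (\<theta> 0 *\<^sub>R z - Aop z) = (2 * \<theta> 0) *\<^sub>R z"
        by (simp add: scaleR_add_left[symmetric])
      finally show ?thesis using t0 by simp
    qed
    ultimately show "z \<in> {x + y |x y. x \<in> U' \<and> y \<in> Em}" by blast
  qed
  have "dim K \<le> dim {x + y |x y. x \<in> U' \<and> y \<in> Em}" by (rule dim_subset[OF dec])
  also have "\<dots> \<le> dim U' + dim Em" using dim_sums_Int[OF sU' sEm] by linarith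
  finally have d1: "dim K \<le> dim U' + dim Em" .
  have d2: "dim K + 1 = DIM('v)" unfolding K_def by (rule dim_orth1[OF sp X0])
  have d3: "2 * dim Em \<le> DIM('v)"
  proof (rule dim_iso[OF sp sEm], intro ballI)
    fix x y assume x: "x \<in> Em" and y: "y \<in> Em"
    have ax: "Aop x = - \<theta> 0 *\<^sub>R x" using x unfolding Em_def by simp
    have ay: "Aop y = - \<theta> 0 *\<^sub>R y" using y unfolding Em_def by simp
    have "g (- \<theta> 0 *\<^sub>R x) y = - g x (- \<theta> 0 *\<^sub>R y)"
      using Aop_skew[OF sp sk cl, of \<theta> x y] unfolding ax ay .
    then have "- \<theta> 0 * g x y = \<theta> 0 * g x y" by simp
    then show "g x y = 0" using t0 by simp
  qed
  obtain k where k: "k \<in> {1..m}" "\<theta> k \<noteq> 0" using ex_k by blast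
  have d4: "dim U' < dim U"
  proof (rule dim_psubset)
    have e1: "span U' = U'" and e2: "span U = U" using sU sU' by (metis span_eq_iff)+
    have kU: "J k X \<in> U" unfolding U_def using k by (intro span_base) auto
    have "J k X \<notin> Ep"
    proof
      assume "J k X \<in> Ep"
      then have "\<theta> 0 *\<^sub>R J k X + (2 * \<theta> k) *\<^sub>R X = \<theta> 0 *\<^sub>R J k X" using AJ[OF k(1)] unfolding Ep_def by simp
      then show False using k(2) X0 by simp
    qed
    then have "U' \<subset> U" using kU unfolding U'_def by blast
    then show "span U' \<subset> span U" unfolding e1 e2 .
  qed
  have d5: "dim U \<le> m"
  proof -
    have "dim U = dim ((\<lambda>i. J i X) ` {1..m})" unfolding U_def by (rule dim_span)
    also have "\<dots> \<le> card ((\<lambda>i. J i X) ` {1..m})" by (rule dim_le_card) (auto intro: span_base)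
    also have "\<dots> \<le> card {1..m}" by (rule card_image_le) simp
    finally show ?thesis by simp
  qed
  show False using d1 d2 d3 d4 d5 dimv by linarith
qed


definition VV :: "'v \<Rightarrow> 'v \<Rightarrow> 'v" where
  "VV P Q = \<mu> 0 *\<^sub>R (g P P *\<^sub>R Q - g Q P *\<^sub>R P) +
     (\<Sum>i=1..m. \<mu> i *\<^sub>R ((3 * g (J i Q) P) *\<^sub>R J i P - g (J i P) P *\<^sub>R J i Q))"

lemma RV: "\<mu> 0 * R0 g Q P P E + (\<Sum>i=1..m. \<mu> i * RJ g (J i) Q P P E) = g (VV P Q) E"
proof -
  have a: "\<mu> 0 * R0 g Q P P E = g (\<mu> 0 *\<^sub>R (g P P *\<^sub>R Q - g Q P *\<^sub>R P)) E"
    by (simp add: R0_def algebra_simps)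
  have b: "\<mu> i * RJ g (J i) Q P P E = g (\<mu> i *\<^sub>R ((3 * g (J i Q) P) *\<^sub>R J i P - g (J i P) P *\<^sub>R J i Q)) E" for i
    by (simp add: RJ_def algebra_simps)
  show ?thesis unfolding VV_def gl_add[OF sp] gl_sum[OF sp] a b ..
qed

lemma jac: "jacobi_op g (\<lambda>A B C D. \<mu> 0 * R0 g A B C D + (\<Sum>i=1..m. \<mu> i * RJ g (J i) A B C D)) P Q = VV P Q"
  by (rule jacobi_op_eq[OF sp]) (rule RV)

theorem not_tjd:
  "\<not> totally_jacobi_dual g (\<lambda>A B C D. \<mu> 0 * R0 g A B C D + (\<Sum>i=1..m. \<mu> i * RJ g (J i) A B C D))"
proof -
  have t0: "\<theta> 0 \<noteq> 0" by (rule t0)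
  have mu0: "\<mu> 0 \<noteq> 0" by (rule mu0)
  define U where "U = span ((\<lambda>i. J i X) ` {1..m})"
  obtain z where gXz: "g X z = 0" and wU: "\<theta> 0 *\<^sub>R z + Aop z \<notin> U" using ex_z unfolding U_def by blast
  define w where "w = \<theta> 0 *\<^sub>R z + Aop z"
  define Jx where "Jx = (\<lambda>i. J i X)"
  have ind: "independent (insert w (Jx ` {1..m}))"
    using independent_insertI[OF _ Jindep[OF sp sk cl X0]] wU unfolding U_def w_def Jx_def by blast
  define d where "d i = \<mu> 0 * \<theta> i / (3 * \<mu> i * \<theta> 0)" for i
  define h where "h v = (if v = w then 1 else d (the_inv_into {1..m} Jx v))" for v
  obtain f where lf: "linear f" and fh: "\<forall>v\<in>insert w (Jx ` {1..m}). f v = h v"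
    using linear_independent_extend[OF ind] by blast
  have fw: "f w = 1" using fh unfolding h_def by simp
  have inj: "inj_on Jx {1..m}" using Jinj[OF sp sk cl X0] unfolding Jx_def by (auto simp: inj_on_def)
  have fJ: "f (J i X) = d i" if i: "i \<in> {1..m}" for i
  proof -
    have "J i X \<in> U" unfolding U_def using i by (intro span_base) auto
    then have "J i X \<noteq> w" using wU unfolding w_def by force
    moreover have "J i X \<in> Jx ` {1..m}" using i unfolding Jx_def by blast
    ultimately have "f (J i X) = d (the_inv_into {1..m} Jx (Jx i))" using fh unfolding h_def Jx_def by auto
    then show ?thesis using the_inv_into_f_f[OF inj i] by simp
  qed
  obtain B where B: "g_orthonormal_basis g B" using onb_exists[OF sp] by blast
  define Y where "Y = (\<Sum>E\<in>B. (g E E * f E) *\<^sub>R E)"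
  have gY: "g Y v = f v" for v
  proof -
    have "f v = f (\<Sum>E\<in>B. (g E E * g v E) *\<^sub>R E)" using arg_cong[OF onb_expand[OF sp B, of v], of f] .
    also have "\<dots> = (\<Sum>E\<in>B. (g E E * g v E) * f E)" by (simp add: linear_sum[OF lf] linear_scale[OF lf])
    also have "\<dots> = g Y v" unfolding Y_def gl_sum[OF sp] gl_scale[OF sp]
      by (rule sum.cong[OF refl]) (simp add: gsym[OF sp, of v])
    finally show ?thesis by simp
  qed
  have gYJ: "g Y (J i X) = d i" if "i \<in> {1..m}" for i using gY fJ that by simp
  have gYw: "g Y w = 1" using gY fw by simp
  have sumd: "(\<Sum>i=1..m. \<theta> i * d i) = - \<theta> 0"
  proof -
    have "(\<Sum>i=1..m. \<theta> i * d i) = (\<Sum>i=1..m. (\<mu> 0 / \<theta> 0) * (\<theta> i ^ 2 / (3 * \<mu> i)))"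
      by (rule sum.cong[OF refl]) (simp add: d_def power2_eq_square mult_ac)
    also have "\<dots> = (1 / \<theta> 0) * (\<mu> 0 * (\<Sum>i=1..m. \<theta> i ^ 2 / (3 * \<mu> i)))"
      unfolding sum_distrib_left by (rule sum.cong[OF refl]) simp
    also have "\<mu> 0 * (\<Sum>i=1..m. \<theta> i ^ 2 / (3 * \<mu> i)) = - (\<theta> 0 ^ 2)" using h1 h2 by simp
    finally show ?thesis using t0 by (simp add: power2_eq_square)
  qed
  have gYX: "g Y X = 1"
  proof -
    have "g Y (\<theta> 0 *\<^sub>R X + Aop X) = 0" using hX by simp
    then have "\<theta> 0 * g Y X + (\<Sum>i=1..m. \<theta> i * g Y (J i X)) = 0" by simp
    moreover have "(\<Sum>i=1..m. \<theta> i * g Y (J i X)) = (\<Sum>i=1..m. \<theta> i * d i)"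
      by (rule sum.cong[OF refl]) (simp add: gYJ)
    ultimately have "\<theta> 0 * g Y X = \<theta> 0" using sumd by simp
    then show ?thesis using t0 by simp
  qed
  have Y0: "Y \<noteq> 0" using gYX by auto
  have coef: "\<mu> i * (3 * d i) = \<mu> 0 / \<theta> 0 * \<theta> i" if "i \<in> {1..m}" for i
    using mu that t0 unfolding d_def by (simp add: field_simps)
  have VXY: "VV X Y = 0"
  proof -
    have "(\<Sum>i=1..m. \<mu> i *\<^sub>R ((3 * g (J i Y) X) *\<^sub>R J i X - g (J i X) X *\<^sub>R J i Y))
        = (\<Sum>i=1..m. (- (\<mu> 0 / \<theta> 0)) *\<^sub>R (\<theta> i *\<^sub>R J i X))"
    proof (rule sum.cong[OF refl])
      fix i assume i: "i \<in> {1..m}"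
      have "g (J i Y) X = - d i" using Jsk[OF sp sk cl i, of Y X] gYJ[OF i] by simp
      moreover have "g (J i X) X = 0" by (rule Jxx[OF sp sk cl i])
      ultimately show "\<mu> i *\<^sub>R ((3 * g (J i Y) X) *\<^sub>R J i X - g (J i X) X *\<^sub>R J i Y)
          = (- (\<mu> 0 / \<theta> 0)) *\<^sub>R (\<theta> i *\<^sub>R J i X)"
        using coef[OF i] by (simp add: algebra_simps)
    qed
    also have "\<dots> = (- (\<mu> 0 / \<theta> 0)) *\<^sub>R Aop X" by (simp only: scaleR_sum_right)
    also have "\<dots> = \<mu> 0 *\<^sub>R X" unfolding AX using t0 by simp
    finally have S: "(\<Sum>i=1..m. \<mu> i *\<^sub>R ((3 * g (J i Y) X) *\<^sub>R J i X - g (J i X) X *\<^sub>R J i Y)) = \<mu> 0 *\<^sub>R X" .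
    show ?thesis unfolding VV_def S using gXX gYX by simp
  qed
  have VYX: "\<not> (\<exists>c. VV Y X = c *\<^sub>R X)"
  proof
    assume "\<exists>c. VV Y X = c *\<^sub>R X"
    then obtain c where c: "VV Y X = c *\<^sub>R X" by blast
    have "g (VV Y X) z = 0" unfolding c using gXz by simp
    moreover have "g (VV Y X) z = - (\<mu> 0 / \<theta> 0)"
    proof -
      have gXY: "g X Y = 1" using gYX gsym[OF sp, of X Y] by simp
      have "(\<Sum>i=1..m. g (\<mu> i *\<^sub>R ((3 * g (J i X) Y) *\<^sub>R J i Y - g (J i Y) Y *\<^sub>R J i X)) z)
          = (\<Sum>i=1..m. - (\<mu> 0 / \<theta> 0) * (\<theta> i * g Y (J i z)))"
      proof (rule sum.cong[OF refl])
        fix i assume i: "i \<in> {1..m}"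
        have "g (J i X) Y = d i" using gYJ[OF i] gsym[OF sp, of Y "J i X"] by simp
        moreover have "g (J i Y) Y = 0" by (rule Jxx[OF sp sk cl i])
        moreover have "g (J i Y) z = - g Y (J i z)" by (rule Jsk[OF sp sk cl i])
        ultimately show "g (\<mu> i *\<^sub>R ((3 * g (J i X) Y) *\<^sub>R J i Y - g (J i Y) Y *\<^sub>R J i X)) z
          = - (\<mu> 0 / \<theta> 0) * (\<theta> i * g Y (J i z))"
          using coef[OF i] by (simp add: algebra_simps)
      qed
      also have "\<dots> = - (\<mu> 0 / \<theta> 0) * g Y (Aop z)"
        by (simp add: sum_distrib_left)
      finally have S: "g (\<Sum>i=1..m. \<mu> i *\<^sub>R ((3 * g (J i X) Y) *\<^sub>R J i Y - g (J i Y) Y *\<^sub>R J i X)) z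
          = - (\<mu> 0 / \<theta> 0) * g Y (Aop z)" unfolding gl_sum[OF sp] .
      have "g (VV Y X) z = \<mu> 0 * (g Y Y * g X z - g X Y * g Y z) - (\<mu> 0 / \<theta> 0) * g Y (Aop z)"
        unfolding VV_def gl_add[OF sp] S by simp
      also have "\<dots> = - (\<mu> 0 / \<theta> 0) * g Y w"
        unfolding w_def using gXz gXY t0 by (simp add: field_simps)
      finally show ?thesis using gYw by simp
    qed
    ultimately show False using mu0 t0 by simp
  qed
  show ?thesis
    unfolding totally_jacobi_dual_def is_eigenvector_def jac
    using X0 Y0 VXY VYX by (metis scaleR_zero_left)
qed

end

theorem mainTheorem7:
  fixes g :: "'v::euclidean_space \<Rightarrow> 'v \<Rightarrow> real"
    and m :: nat
    and J :: "nat \<Rightarrow> 'v \<Rightarrow> 'v"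
    and \<mu> :: "nat \<Rightarrow> real"
    and \<theta> :: "nat \<Rightarrow> real"
    and X :: 'v
  assumes "scalar_product g"
    and "DIM('v) > 2 * m"
    and "\<forall>i\<in>{1..m}. skew_adjoint g (J i)"
    and "\<forall>i\<in>{1..m}. \<forall>j\<in>{1..m}. \<forall>x. J i (J j x) + J j (J i x) = (if i = j then 2 else 0) *\<^sub>R x"
    and "\<forall>i\<in>{1..m}. \<mu> i \<noteq> 0"
    and "\<exists>i\<in>{0..m}. \<theta> i \<noteq> 0"
    and "X \<noteq> 0"
    and "\<theta> 0 *\<^sub>R X + (\<Sum>i=1..m. \<theta> i *\<^sub>R J i X) = 0"
    and "\<theta> 0 ^ 2 = (\<Sum>i=1..m. \<theta> i ^ 2)"
    and "(\<Sum>i=1..m. \<theta> i ^ 2) = - \<mu> 0 * (\<Sum>i=1..m. \<theta> i ^ 2 / (3 * \<mu> i))"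
  shows "\<not> totally_jacobi_dual g
           (\<lambda>A B C D. \<mu> 0 * R0 g A B C D + (\<Sum>i=1..m. \<mu> i * RJ g (J i) A B C D))"
  by (rule not_tjd[OF assms])

end
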